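(* Let $\mathcal{F}$ be a compact (in the uniform norm) family of uniformly bounded real-valued Lipschitz functions on $[0,1]$ such that $\int_0^{1/2} f < \int_{1/2}^1 f$ for every $f \in \mathcal{F}$. Then there exist $M, \epsilon > 0$ such that for all integers $m > M$, all integers $m_* \in ((\frac{1}{2}-\epsilon)m, (\frac{1}{2}+\epsilon)m)$, and all $f \in \mathcal{F}$, $$\sum_{j=1}^{m_*} \frac{1}{\log^2(j+3)}f\left(\frac{j}{m}\right) < \sum_{j=m_*+1}^m \frac{1}{\log^2(j+3)}f\left(\frac{j}{m}\right).$$
   Context: $\log$ denotes the natural logarithm. *)

theory Defs
  imports "HOL-Analysis.Analysis"
begin

text \<open>A family of real functions, considered on [0,1], is compact in the uniform norm
  (sup norm over [0,1]); stated as sequential compactness, which is equivalent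
  for (pseudo)metric spaces: every sequence in the family has a subsequence
  converging uniformly on [0,1] to a member of the family.\<close>
definition uniformly_compact_on01 :: "(real \<Rightarrow> real) set \<Rightarrow> bool" where
  "uniformly_compact_on01 F \<longleftrightarrow>
     (\<forall>g::nat \<Rightarrow> real \<Rightarrow> real. (\<forall>n. g n \<in> F) \<longrightarrow>
        (\<exists>r h. strict_mono r \<and> h \<in> F \<and> uniform_limit {0..1} (\<lambda>n. g (r n)) h sequentially))"

end

theory Submission
  imports Defs "HOL-Real_Asymp.Real_Asymp"
begin


lemma lip_cont: "C-lipschitz_on {0..1} (h::real\<Rightarrow>real) \<Longrightarrow> continuous_on {0..1::real} h"
  using lipschitz_on_continuous_on by blast

lemma lip_int: fixes h :: "real \<Rightarrow> real" assumes "C-lipschitz_on {0..1} h" "0 \<le> a" "b \<le> 1"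
  shows "h integrable_on {a..b}"
proof -
  have "continuous_on {a..b} h"
    using lip_cont[OF assms(1)] by (rule continuous_on_subset) (use assms in auto)
  thus ?thesis by (rule integrable_continuous_interval)
qed

lemma step1:
  fixes h :: "real \<Rightarrow> real"
  assumes L: "C-lipschitz_on {0..1} h" and "0 \<le> a" "a \<le> c" "c \<le> 1"
  shows "\<bar>h c * (c - a) - integral {a..c} h\<bar> \<le> C * (c - a)^2"
proof -
  have C0: "0 \<le> C" using L lipschitz_on_nonneg by blast
  have b: "\<bar>h c - h x\<bar> \<le> C * (c - a)" if "x \<in> {a..c}" for x
  proof -
    have "dist (h c) (h x) \<le> C * dist c x"
      by (rule lipschitz_onD[OF L]) (use assms that in auto)
    also have "\<dots> \<le> C * (c - a)" using that C0 by (auto simp: dist_real_def intro!: mult_left_mono)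
    finally show ?thesis by (simp add: dist_real_def)
  qed
  have b': "h c - C*(c-a) \<le> h x \<and> h x \<le> h c + C*(c-a)" if "a \<le> x" "x \<le> c" for x
    using b[of x] that by (auto simp: abs_le_iff)
  have I: "h integrable_on {a..c}" using lip_int[OF L] assms by auto
  have "integral {a..c} (\<lambda>x. h c - C * (c - a)) \<le> integral {a..c} h"
    by (rule integral_le) (auto simp: I b')
  moreover have "integral {a..c} h \<le> integral {a..c} (\<lambda>x. h c + C * (c - a))"
    by (rule integral_le) (auto simp: I b')
  ultimately show ?thesis using assms
    by (simp add: abs_le_iff power2_eq_square algebra_simps)
qed

lemma riemann:
  fixes h :: "real \<Rightarrow> real" and m a b :: nat
  assumes L: "C-lipschitz_on {0..1} h" and m: "0 < m" and ab: "a \<le> b" and bm: "b \<le> m"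
  shows "\<bar>(\<Sum>j=a+1..b. h (real j / real m)) / real m - integral {real a / real m .. real b / real m} h\<bar>
          \<le> real (b - a) * C / real m ^ 2"
  using ab bm
proof (induction b rule: dec_induct)
  case base
  then show ?case by simp
next
  case (step n)
  have C0: "0 \<le> C" using L lipschitz_on_nonneg by blast
  have le1: "real (Suc n) / real m \<le> 1" using step m by auto
  have le0: "0 \<le> real a / real m" by simp
  have an: "real a / real m \<le> real n / real m" using step by (simp add: divide_right_mono)
  have nS: "real n / real m \<le> real (Suc n) / real m" by (simp add: divide_right_mono)
  have comb: "integral {real a / real m .. real (Suc n) / real m} h =
     integral {real a / real m .. real n / real m} h + integral {real n / real m .. real (Suc n) / real m} h"
    using Henstock_Kurzweil_Integration.integral_combine[OF an nS lip_int[OF L le0 le1]] by simp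
  have s1: "\<bar>h (real (Suc n) / real m) * (real (Suc n) / real m - real n / real m)
     - integral {real n / real m .. real (Suc n) / real m} h\<bar> \<le> C * (real (Suc n) / real m - real n / real m)^2"
    by (rule step1[OF L]) (use nS le1 in auto)
  have e1: "real (Suc n) / real m - real n / real m = 1 / real m" using m by (simp add: field_simps)
  have sum: "(\<Sum>j=a+1..Suc n. h (real j / real m)) = (\<Sum>j=a+1..n. h (real j / real m)) + h (real (Suc n) / real m)"
    using step by (simp add: sum.cl_ivl_Suc)
  have IH: "\<bar>(\<Sum>j=a+1..n. h (real j / real m)) / real m - integral {real a / real m .. real n / real m} h\<bar>
          \<le> real (n - a) * C / real m ^ 2" using step by auto
  have "real (Suc n - a) * C / real m ^ 2 = real (n - a) * C / real m ^ 2 + C * (1 / real m)^2"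
    using step by (simp add: of_nat_diff field_simps)
  then show ?case using IH s1 unfolding comb sum e1
    by (simp add: add_divide_distrib)
qed



lemma Q_lim: "((\<lambda>x::real. ln (x+3)^2 / x * (x / ln x ^ 3 + x / ln (x / ln x ^ 3 + 3)^2)) \<longlongrightarrow> 1) at_top"
  by real_asymp

lemma w_le1: "1 / ln (real j + 3)^2 \<le> 1"
proof -
  have "exp 1 \<le> (3::real)" using exp_le by linarith
  then have "ln (exp 1) \<le> ln (3::real)" by (subst ln_le_cancel_iff) auto
  then have "1 \<le> ln (3::real)" by simp
  moreover have "ln 3 \<le> ln (real j + 3)" by simp
  ultimately have "1 \<le> ln (real j + 3)^2" by (smt (verit) one_le_power)
  thus ?thesis by simp
qed

lemma w_sum_bound:
  fixes m :: nat and t :: real assumes t0: "0 \<le> t"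
  shows "(\<Sum>j=1..m. 1 / ln (real j + 3)^2) \<le> t + real m / ln (t + 3)^2"
proof -
  have lt: "0 < ln (t+3)" using t0 by simp
  have pw: "1 / ln (real j + 3)^2 \<le> (if real j \<le> t then 1 else 0) + 1 / ln (t+3)^2" for j
  proof (cases "real j \<le> t")
    case True
    have "0 \<le> 1 / ln (t+3)^2" by simp
    then show ?thesis using w_le1[of j] True by (simp only: if_True)
  next
    case False
    then have "ln (t+3) \<le> ln (real j + 3)" using t0 by simp
    then have "ln (t+3)^2 \<le> ln (real j + 3)^2" using lt by (intro power_mono) auto
    then have "1 / ln (real j + 3)^2 \<le> 1 / ln (t+3)^2" using lt
      by (intro divide_left_mono) auto
    then show ?thesis using False by simp
  qed
  have "(\<Sum>j=1..m. 1 / ln (real j + 3)^2) \<le> (\<Sum>j=1..m. (if real j \<le> t then 1 else 0) + 1 / ln (t+3)^2)"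
    by (rule sum_mono) (rule pw)
  also have "\<dots> = real (card {j\<in>{1..m}. real j \<le> t}) + real m / ln (t+3)^2"
    by (simp add: sum.distrib sum.If_cases, rule arg_cong[where f=card], auto)
  also have "real (card {j\<in>{1..m}. real j \<le> t}) \<le> t"
  proof -
    have "{j\<in>{1..m}. real j \<le> t} \<subseteq> {1..nat \<lfloor>t\<rfloor>}"
    proof
      fix j assume "j \<in> {j\<in>{1..m}. real j \<le> t}"
      then have j1: "1 \<le> j" and jt: "real j \<le> t" by auto
      from jt have "int j \<le> \<lfloor>t\<rfloor>" by (simp add: le_floor_iff)
      then have "j \<le> nat \<lfloor>t\<rfloor>" by (simp add: le_nat_iff)
      then show "j \<in> {1..nat \<lfloor>t\<rfloor>}" using j1 by simp
    qed
    then have "card {j\<in>{1..m}. real j \<le> t} \<le> nat \<lfloor>t\<rfloor>"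
      using card_mono[of "{1..nat \<lfloor>t\<rfloor>}" "{j\<in>{1..m}. real j \<le> t}"] by simp
    moreover have "real (nat \<lfloor>t\<rfloor>) \<le> t" using t0 by simp
    ultimately show ?thesis by linarith
  qed
  finally show ?thesis by simp
qed

lemma weight_asym:
  assumes "e > 0"
  shows "\<exists>K. \<forall>m::nat\<ge>K. ln (real m + 3)^2 / real m * (\<Sum>j=1..m. 1 / ln (real j + 3)^2) \<le> 1 + e"
proof -
  have "eventually (\<lambda>x::real. ln (x+3)^2 / x * (x / ln x ^ 3 + x / ln (x / ln x ^ 3 + 3)^2) < 1 + e) at_top"
    using order_tendstoD(2)[OF Q_lim] assms by simp
  moreover have "eventually (\<lambda>x::real. x \<ge> 1) at_top" by simp
  ultimately have "eventually (\<lambda>x::real. x \<ge> 1 \<and> ln (x+3)^2 / x * (x / ln x ^ 3 + x / ln (x / ln x ^ 3 + 3)^2) < 1 + e) at_top"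
    by eventually_elim auto
  then obtain X where X: "\<And>x. x \<ge> X \<Longrightarrow> x \<ge> 1 \<and> ln (x+3)^2 / x * (x / ln x ^ 3 + x / ln (x / ln x ^ 3 + 3)^2) < 1 + e"
    by (auto simp: eventually_at_top_linorder)
  show ?thesis
  proof (intro exI allI impI)
    fix m :: nat assume "m \<ge> nat \<lceil>X\<rceil>"
    then have mX: "real m \<ge> X" by linarith
    note Xm = X[OF mX]
    define t where "t = real m / ln (real m) ^ 3"
    have t0: "0 \<le> t" using Xm by (simp add: t_def)
    have "ln (real m + 3)^2 / real m * (\<Sum>j=1..m. 1 / ln (real j + 3)^2)
       \<le> ln (real m + 3)^2 / real m * (t + real m / ln (t + 3)^2)"
      by (rule mult_left_mono[OF w_sum_bound[OF t0]]) simp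
    also have "\<dots> < 1 + e" using Xm by (simp add: t_def)
    finally show "ln (real m + 3)^2 / real m * (\<Sum>j=1..m. 1 / ln (real j + 3)^2) \<le> 1 + e" by simp
  qed
qed



lemma split_abs:
  fixes a :: "nat \<Rightarrow> real" assumes "s \<le> m"
  shows "\<bar>(\<Sum>j=s+1..m. a j) - (\<Sum>j=1..s. a j)\<bar> \<le> (\<Sum>j=1..m. \<bar>a j\<bar>)"
proof -
  have "(\<Sum>j=1..m. \<bar>a j\<bar>) = (\<Sum>j=1..s. \<bar>a j\<bar>) + (\<Sum>j=s+1..m. \<bar>a j\<bar>)"
    using sum.ub_add_nat[of 1 s "\<lambda>j. \<bar>a j\<bar>" "m - s"] assms by simp
  moreover have "\<bar>\<Sum>j=1..s. a j\<bar> \<le> (\<Sum>j=1..s. \<bar>a j\<bar>)" by (rule sum_abs)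
  moreover have "\<bar>\<Sum>j=s+1..m. a j\<bar> \<le> (\<Sum>j=s+1..m. \<bar>a j\<bar>)" by (rule sum_abs)
  ultimately show ?thesis by linarith
qed

lemma Lw_ge1: assumes "1 \<le> j" "j \<le> m"
  shows "1 \<le> ln (real m + 3)^2 * (1 / ln (real j + 3)^2)"
proof -
  have p: "0 < ln (real j + 3)" by simp
  have "ln (real j + 3) \<le> ln (real m + 3)" using assms by simp
  then have "ln (real j + 3)^2 \<le> ln (real m + 3)^2" using p by (intro power_mono) auto
  then show ?thesis using p by simp
qed



lemma neg_abs_div: assumes "0 < (m::real)" shows "-(\<bar>x\<bar>/m) \<le> x/m"
proof -
  have "-\<bar>x\<bar> \<le> x" by simp
  hence "(-\<bar>x\<bar>)/m \<le> x/m" using assms by (intro divide_right_mono) auto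
  thus ?thesis by simp
qed

lemma main_est:
  fixes g h :: "real \<Rightarrow> real" and m s :: nat
  assumes m: "0 < m" and sm: "s \<le> m"
    and gB: "\<forall>x\<in>{0..1}. \<bar>g x\<bar> \<le> B"
    and gh: "\<forall>x\<in>{0..1}. \<bar>g x - h x\<bar> \<le> \<eta>"
    and L: "C-lipschitz_on {0..1} h"
  shows "(integral {real s / real m..1} h - integral {0..real s / real m} h)
          - B * (ln (real m + 3)^2 / real m * (\<Sum>j=1..m. 1 / ln (real j + 3)^2) - 1) - \<eta> - 2 * C / real m
       \<le> ln (real m + 3)^2 / real m *
          ((\<Sum>j=s+1..m. g (real j / real m) / ln (real j + 3)^2) - (\<Sum>j=1..s. g (real j / real m) / ln (real j + 3)^2))"
proof -
  define Lm where "Lm = ln (real m + 3)^2"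
  define a where "a j = Lm * (g (real j / real m) / ln (real j + 3)^2) - h (real j / real m)" for j
  have mpos: "0 < real m" using m by simp
  have C0: "0 \<le> C" using L lipschitz_on_nonneg by blast
  have ab: "\<bar>a j\<bar> \<le> B * (Lm * (1 / ln (real j + 3)^2) - 1) + \<eta>" if j: "j \<in> {1..m}" for j
  proof -
    have x01: "real j / real m \<in> {0..1}" using j by auto
    have ge: "1 \<le> Lm * (1 / ln (real j + 3)^2)" unfolding Lm_def using Lw_ge1 j by auto
    have "a j = (Lm * (1 / ln (real j + 3)^2) - 1) * g (real j / real m) + (g (real j / real m) - h (real j / real m))"
      unfolding a_def by (simp add: algebra_simps)
    also have "\<bar>\<dots>\<bar> \<le> (Lm * (1 / ln (real j + 3)^2) - 1) * \<bar>g (real j / real m)\<bar> + \<bar>g (real j / real m) - h (real j / real m)\<bar>"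
      using ge by (simp add: abs_mult abs_triangle_ineq[THEN order_trans])
    also have "\<dots> \<le> (Lm * (1 / ln (real j + 3)^2) - 1) * B + \<eta>"
      using gB gh x01 ge by (intro add_mono mult_left_mono) auto
    finally show ?thesis by (simp add: mult.commute)
  qed
  have sa: "\<bar>(\<Sum>j=s+1..m. a j) - (\<Sum>j=1..s. a j)\<bar> \<le> (\<Sum>j=1..m. B * (Lm * (1 / ln (real j + 3)^2) - 1) + \<eta>)"
    using split_abs[OF sm, of a] sum_mono[of "{1..m}" "\<lambda>j. \<bar>a j\<bar>", OF ab] by linarith
  also have "\<dots> = B * (Lm * (\<Sum>j=1..m. 1 / ln (real j + 3)^2) - real m) + real m * \<eta>"
    by (simp add: sum.distrib sum_subtractf sum_distrib_left algebra_simps)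
  finally have sa1: "\<bar>(\<Sum>j=s+1..m. a j) - (\<Sum>j=1..s. a j)\<bar> \<le> B * (Lm * (\<Sum>j=1..m. 1 / ln (real j + 3)^2) - real m) + real m * \<eta>" .
  have sa2: "\<bar>(\<Sum>j=s+1..m. a j) - (\<Sum>j=1..s. a j)\<bar> / real m \<le>
      B * (Lm / real m * (\<Sum>j=1..m. 1 / ln (real j + 3)^2) - 1) + \<eta>"
  proof -
    have "\<bar>(\<Sum>j=s+1..m. a j) - (\<Sum>j=1..s. a j)\<bar> / real m \<le>
       (B * (Lm * (\<Sum>j=1..m. 1 / ln (real j + 3)^2) - real m) + real m * \<eta>) / real m"
      using sa1 mpos by (intro divide_right_mono) auto
    also have "\<dots> = B * (Lm / real m * (\<Sum>j=1..m. 1 / ln (real j + 3)^2) - 1) + \<eta>"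
      using mpos by (simp add: field_simps)
    finally show ?thesis .
  qed
  have R1: "\<bar>(\<Sum>j=s+1..m. h (real j / real m)) / real m - integral {real s / real m .. real m / real m} h\<bar>
          \<le> real (m - s) * C / real m ^ 2" by (rule riemann[OF L m sm order_refl])
  have R2: "\<bar>(\<Sum>j=0+1..s. h (real j / real m)) / real m - integral {real 0 / real m .. real s / real m} h\<bar>
          \<le> real (s - 0) * C / real m ^ 2" by (rule riemann[OF L m _ sm]) simp
  have "real (m - s) * C / real m ^ 2 \<le> C / real m" and "real s * C / real m ^ 2 \<le> C / real m"
    using sm mpos C0 by (auto simp: field_simps power2_eq_square intro!: mult_right_mono mult_left_mono)
  with R1 R2 have RR: "(integral {real s / real m..1} h - integral {0..real s / real m} h) - 2 * C / real m
       \<le> ((\<Sum>j=s+1..m. h (real j / real m)) - (\<Sum>j=1..s. h (real j / real m))) / real m"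
    using mpos by (simp add: diff_divide_distrib)
  have key: "Lm / real m * ((\<Sum>j=s+1..m. g (real j / real m) / ln (real j + 3)^2) - (\<Sum>j=1..s. g (real j / real m) / ln (real j + 3)^2))
     = ((\<Sum>j=s+1..m. h (real j / real m)) - (\<Sum>j=1..s. h (real j / real m))) / real m
       + ((\<Sum>j=s+1..m. a j) - (\<Sum>j=1..s. a j)) / real m"
  proof -
    have aR: "(\<Sum>j=s+1..m. a j) = Lm * (\<Sum>j=s+1..m. g (real j / real m) / ln (real j + 3)^2) - (\<Sum>j=s+1..m. h (real j / real m))"
      unfolding a_def by (simp add: sum_subtractf sum_distrib_left)
    have aL: "(\<Sum>j=1..s. a j) = Lm * (\<Sum>j=1..s. g (real j / real m) / ln (real j + 3)^2) - (\<Sum>j=1..s. h (real j / real m))"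
      unfolding a_def by (simp add: sum_subtractf sum_distrib_left)
    show ?thesis unfolding aR aL using mpos by (simp add: field_simps)
  qed
  have "- (\<bar>(\<Sum>j=s+1..m. a j) - (\<Sum>j=1..s. a j)\<bar> / real m) \<le> ((\<Sum>j=s+1..m. a j) - (\<Sum>j=1..s. a j)) / real m"
    by (rule neg_abs_div[OF mpos])
  then show ?thesis using key RR sa2 unfolding Lm_def by linarith
qed



lemma int_bound:
  fixes h :: "real \<Rightarrow> real"
  assumes L: "C-lipschitz_on {0..1} h" and hB: "\<forall>x\<in>{0..1}. \<bar>h x\<bar> \<le> B"
    and "0 \<le> a" "a \<le> b" "b \<le> 1"
  shows "\<bar>integral {a..b} h\<bar> \<le> B * (b - a)"
proof -
  have I: "h integrable_on {a..b}" using lip_int[OF L] assms by auto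
  have b': "-B \<le> h x \<and> h x \<le> B" if "a \<le> x" "x \<le> b" for x
  proof -
    have "x \<in> {0..1}" using that assms by auto
    then have "\<bar>h x\<bar> \<le> B" using hB by blast
    then show ?thesis by (simp add: abs_le_iff)
  qed
  have "integral {a..b} (\<lambda>x. -B) \<le> integral {a..b} h"
    by (rule integral_le) (auto simp: I b')
  moreover have "integral {a..b} h \<le> integral {a..b} (\<lambda>x. B)"
    by (rule integral_le) (auto simp: I b')
  ultimately show ?thesis using assms by (simp add: abs_le_iff algebra_simps)
qed

lemma int_shift:
  fixes h :: "real \<Rightarrow> real"
  assumes L: "C-lipschitz_on {0..1} h" and hB: "\<forall>x\<in>{0..1}. \<bar>h x\<bar> \<le> B"
    and u: "0 \<le> u" "u \<le> 1"
  shows "(integral {1/2..1} h - integral {0..1/2} h) - 2 * B * \<bar>u - 1/2\<bar>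
     \<le> integral {u..1} h - integral {0..u} h"
proof (cases "u \<le> 1/2")
  case True
  have c1: "integral {0..u} h + integral {u..1/2} h = integral {0..1/2} h"
    by (rule Henstock_Kurzweil_Integration.integral_combine) (use True u lip_int[OF L, of 0 "1/2"] in auto)
  have c2: "integral {u..1/2} h + integral {1/2..1} h = integral {u..1} h"
    by (rule Henstock_Kurzweil_Integration.integral_combine) (use True u lip_int[OF L, of u 1] in auto)
  have "\<bar>integral {u..1/2} h\<bar> \<le> B * (1/2 - u)" by (rule int_bound[OF L hB]) (use True u in auto)
  then show ?thesis using c1 c2 True by (simp add: abs_le_iff)
next
  case False
  have c1: "integral {0..1/2} h + integral {1/2..u} h = integral {0..u} h"
    by (rule Henstock_Kurzweil_Integration.integral_combine) (use False u lip_int[OF L, of 0 u] in auto)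
  have c2: "integral {1/2..u} h + integral {u..1} h = integral {1/2..1} h"
    by (rule Henstock_Kurzweil_Integration.integral_combine) (use False u lip_int[OF L, of "1/2" 1] in auto)
  have "\<bar>integral {1/2..u} h\<bar> \<le> B * (u - 1/2)" by (rule int_bound[OF L hB]) (use False u in auto)
  then show ?thesis using c1 c2 False by (simp add: abs_le_iff)
qed

lemma sum_int_conv: "(\<Sum>j=int a..int b. \<phi> j) = (\<Sum>k=a..b. (\<phi> (int k) :: real))"
  by (simp add: image_int_atLeastAtMost[symmetric] sum.reindex)

theorem claim13:
  fixes F :: "(real \<Rightarrow> real) set"
  assumes compact: "uniformly_compact_on01 F"
    and bounded: "\<exists>B. \<forall>f\<in>F. \<forall>x\<in>{0..1}. \<bar>f x\<bar> \<le> B"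
    and lipschitz: "\<forall>f\<in>F. \<exists>C. C-lipschitz_on {0..1} f"
    and ineq: "\<forall>f\<in>F. integral {0..1/2} f < integral {1/2..1} f"
  shows "\<exists>M>0. \<exists>\<epsilon>>0. \<forall>m::int. real_of_int m > M \<longrightarrow>
           (\<forall>ms::int. (1/2 - \<epsilon>) * real_of_int m < real_of_int ms
                     \<and> real_of_int ms < (1/2 + \<epsilon>) * real_of_int m \<longrightarrow>
             (\<forall>f\<in>F. (\<Sum>j=1..ms. f (real_of_int j / real_of_int m) / (ln (real_of_int j + 3))^2)
                   < (\<Sum>j=ms+1..m. f (real_of_int j / real_of_int m) / (ln (real_of_int j + 3))^2)))"
proof (rule ccontr)
  assume neg: "\<not> ?thesis"
  define Phi where "Phi M \<epsilon> \<longleftrightarrow> (\<forall>m::int. real_of_int m > M \<longrightarrow>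
           (\<forall>ms::int. (1/2 - \<epsilon>) * real_of_int m < real_of_int ms
                     \<and> real_of_int ms < (1/2 + \<epsilon>) * real_of_int m \<longrightarrow>
             (\<forall>f\<in>F. (\<Sum>j=1..ms. f (real_of_int j / real_of_int m) / (ln (real_of_int j + 3))^2)
                   < (\<Sum>j=ms+1..m. f (real_of_int j / real_of_int m) / (ln (real_of_int j + 3))^2))))" for M \<epsilon> :: real
  define Q where "Q n m ms f \<longleftrightarrow> real_of_int m > real n + 1 \<and>
          (1/2 - 1/(real n + 3)) * real_of_int m < real_of_int ms \<and>
          real_of_int ms < (1/2 + 1/(real n + 3)) * real_of_int m \<and> f \<in> F \<and>
          \<not> ((\<Sum>j=1..ms. f (real_of_int j / real_of_int m) / (ln (real_of_int j + 3))^2)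
                   < (\<Sum>j=ms+1..m. f (real_of_int j / real_of_int m) / (ln (real_of_int j + 3))^2))"
    for n :: nat and m ms :: int and f
  have neg': "\<not> (\<exists>M>0. \<exists>\<epsilon>>0. Phi M \<epsilon>)" using neg unfolding Phi_def .
  have "\<exists>m ms f. Q n m ms f" for n
  proof -
    have p1: "real n + 1 > 0" and p2: "1/(real n + 3) > 0" by auto
    have "\<not> Phi (real n + 1) (1/(real n + 3))" using neg' p1 p2 by blast
    then show ?thesis unfolding Phi_def Q_def by blast
  qed
  then obtain mm ss gg where QQ: "\<And>n. Q n (mm n) (ss n) (gg n)" by metis
  note P = QQ[unfolded Q_def]
  have "\<forall>n. gg n \<in> F" using P by blast
  then obtain r h where r: "strict_mono r" and hF: "h \<in> F"
    and ul: "uniform_limit {0..1} (\<lambda>n. gg (r n)) h sequentially"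
    using compact unfolding uniformly_compact_on01_def by blast
  obtain B where B: "\<forall>f\<in>F. \<forall>x\<in>{0..1}. \<bar>f x\<bar> \<le> B" using bounded by blast
  obtain C where C: "C-lipschitz_on {0..1} h" using lipschitz hF by blast
  have C0: "0 \<le> C" using C lipschitz_on_nonneg by blast
  have hB: "\<forall>x\<in>{0..1}. \<bar>h x\<bar> \<le> B" using B hF by blast
  have B0: "0 \<le> B" using hB[rule_format, of 0] by simp
  define G where "G = integral {1/2..1} h - integral {0..1/2} h"
  have G0: "G > 0" using ineq hF unfolding G_def by auto
  define e where "e = G / 5"
  have e0: "e > 0" using G0 by (simp add: e_def)
  have "eventually (\<lambda>n. \<forall>x\<in>{0..1}. dist (gg (r n) x) (h x) < e) sequentially"
    using uniform_limitD[OF ul e0] .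
  then obtain N1 where N1: "\<And>n. n \<ge> N1 \<Longrightarrow> \<forall>x\<in>{0..1}. dist (gg (r n) x) (h x) < e"
    by (auto simp: eventually_sequentially)
  have eB: "e / (B + 1) > 0" using e0 B0 by simp
  obtain K where K: "\<And>m::nat. m \<ge> K \<Longrightarrow>
      ln (real m + 3)^2 / real m * (\<Sum>j=1..m. 1 / ln (real j + 3)^2) \<le> 1 + e / (B + 1)"
    using weight_asym[OF eB] by blast
  define n where "n = max N1 (max K (max (nat \<lceil>2 * C / e\<rceil>) (nat \<lceil>2 * B / e\<rceil>)))"
  define k where "k = r n"
  have kn: "n \<le> k" unfolding k_def using seq_suble[OF r] by simp
  have nK: "K \<le> n" and nN1: "N1 \<le> n" unfolding n_def by auto
  have nC: "2 * C / e \<le> real n" unfolding n_def by linarith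
  have nB: "2 * B / e \<le> real n" unfolding n_def by linarith
  note Pk = P[of k]
  define m where "m = mm k"
  define ms where "ms = ss k"
  define g where "g = gg k"
  have mk: "real_of_int m > real k + 1" using Pk unfolding m_def by blast
  have ms1: "(1/2 - 1/(real k + 3)) * real_of_int m < real_of_int ms"
    using Pk unfolding m_def ms_def by blast
  have ms2: "real_of_int ms < (1/2 + 1/(real k + 3)) * real_of_int m"
    using Pk unfolding m_def ms_def by blast
  have gF: "g \<in> F" using Pk unfolding g_def by blast
  have notlt: "\<not> ((\<Sum>j=1..ms. g (real_of_int j / real_of_int m) / (ln (real_of_int j + 3))^2)
                   < (\<Sum>j=ms+1..m. g (real_of_int j / real_of_int m) / (ln (real_of_int j + 3))^2))"
    using Pk unfolding g_def m_def ms_def by blast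
  have k3: "1/(real k + 3) \<le> 1/3" by (simp add: field_simps)
  have m0: "real_of_int m > 0" using mk by linarith
  have ms0: "real_of_int ms > 0"
  proof -
    have "(1/2 - 1/3) * real_of_int m \<le> (1/2 - 1/(real k + 3)) * real_of_int m"
      by (intro mult_right_mono) (use k3 m0 in linarith)+
    moreover have "(1/2 - 1/3) * real_of_int m > 0" using m0 by simp
    ultimately show ?thesis using ms1 by linarith
  qed
  have msm: "real_of_int ms < real_of_int m"
  proof -
    have "(1/2 + 1/(real k + 3)) * real_of_int m \<le> (1/2 + 1/3) * real_of_int m"
      by (intro mult_right_mono) (use k3 m0 in linarith)+
    moreover have "(1/2 + 1/3) * real_of_int m < real_of_int m" using m0 by simp
    ultimately show ?thesis using ms2 by linarith
  qed
  define M where "M = nat m"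
  define S where "S = nat ms"
  have mM: "m = int M" and msS: "ms = int S" using m0 ms0 unfolding M_def S_def by auto
  have M0: "0 < M" and SM: "S \<le> M" using m0 msm mM msS by auto
  have Mk: "real M > real k + 1" using mk mM by simp
  have sumL: "(\<Sum>j=1..ms. g (real_of_int j / real_of_int m) / (ln (real_of_int j + 3))^2)
      = (\<Sum>j=1..S. g (real j / real M) / ln (real j + 3)^2)"
    using sum_int_conv[where a=1 and b=S and \<phi>="\<lambda>j. g (real_of_int j / real_of_int m) / (ln (real_of_int j + 3))^2"]
    unfolding msS mM by simp
  have sumR: "(\<Sum>j=ms+1..m. g (real_of_int j / real_of_int m) / (ln (real_of_int j + 3))^2)
      = (\<Sum>j=S+1..M. g (real j / real M) / ln (real j + 3)^2)"
    using sum_int_conv[where a="S+1" and b=M and \<phi>="\<lambda>j. g (real_of_int j / real_of_int m) / (ln (real_of_int j + 3))^2"]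
    unfolding msS mM by (simp add: add.commute)
  have le0: "(\<Sum>j=S+1..M. g (real j / real M) / ln (real j + 3)^2) - (\<Sum>j=1..S. g (real j / real M) / ln (real j + 3)^2) \<le> 0"
    using notlt unfolding sumL sumR by simp
  have Lpos: "ln (real M + 3)^2 / real M \<ge> 0" by simp
  have prod0: "ln (real M + 3)^2 / real M *
      ((\<Sum>j=S+1..M. g (real j / real M) / ln (real j + 3)^2) - (\<Sum>j=1..S. g (real j / real M) / ln (real j + 3)^2)) \<le> 0"
    using mult_left_mono[OF le0 Lpos] by simp
  have gB: "\<forall>x\<in>{0..1}. \<bar>g x\<bar> \<le> B" using B gF by blast
  have gh: "\<forall>x\<in>{0..1}. \<bar>g x - h x\<bar> \<le> e"
    using N1[OF nN1] unfolding g_def k_def by (auto simp: dist_real_def less_imp_le)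
  note est = main_est[OF M0 SM gB gh C]
  define u where "u = real S / real M"
  have u01: "0 \<le> u" "u \<le> 1" using M0 SM unfolding u_def by (auto simp: field_simps)
  have uq: "u = real_of_int ms / real_of_int m" unfolding u_def msS mM by simp
  have du: "\<bar>u - 1/2\<bar> \<le> 1/(real k + 3)"
  proof -
    have "1/2 - 1/(real k + 3) < u" using ms1 m0 unfolding uq by (simp add: field_simps)
    moreover have "u < 1/2 + 1/(real k + 3)" using ms2 m0 unfolding uq by (simp add: field_simps)
    ultimately show ?thesis by (simp add: abs_le_iff)
  qed
  have sh: "G - 2 * B * \<bar>u - 1/2\<bar> \<le> integral {u..1} h - integral {0..u} h"
    using int_shift[OF C hB u01] unfolding G_def .
  have t1: "2 * B * \<bar>u - 1/2\<bar> \<le> e"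
  proof -
    have "2 * B * \<bar>u - 1/2\<bar> \<le> 2 * B * (1/(real k + 3))"
      using du B0 by (intro mult_left_mono) auto
    also have "\<dots> \<le> e"
    proof -
      have "2 * B \<le> e * real n" using nB e0 by (simp add: divide_le_eq mult.commute)
      also have "\<dots> \<le> e * (real k + 3)" using kn e0 by (intro mult_left_mono) auto
      finally show ?thesis by (simp add: divide_le_eq)
    qed
    finally show ?thesis .
  qed
  have t2: "B * (ln (real M + 3)^2 / real M * (\<Sum>j=1..M. 1 / ln (real j + 3)^2) - 1) \<le> e"
  proof -
    have "K \<le> M" using nK kn Mk by linarith
    then have "ln (real M + 3)^2 / real M * (\<Sum>j=1..M. 1 / ln (real j + 3)^2) - 1 \<le> e / (B + 1)"
      using K by fastforce
    then have "B * (ln (real M + 3)^2 / real M * (\<Sum>j=1..M. 1 / ln (real j + 3)^2) - 1) \<le> B * (e / (B + 1))"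
      using B0 by (intro mult_left_mono) auto
    also have "\<dots> \<le> e" using B0 e0 by (simp add: field_simps)
    finally show ?thesis .
  qed
  have t3: "2 * C / real M \<le> e"
  proof -
    have "2 * C \<le> e * real n" using nC e0 by (simp add: divide_le_eq mult.commute)
    also have "\<dots> \<le> e * real M" using kn e0 Mk by (intro mult_left_mono) auto
    finally show ?thesis using M0 by (simp add: divide_le_eq mult.commute)
  qed
  have "G = 5 * e" unfolding e_def by simp
  then show False using est prod0 sh t1 t2 t3 e0 unfolding u_def by linarith
qed

end
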